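(* Let $\mathcal{F}_1,\dots,\mathcal{F}_k$ be finite nonempty families of convex sets in $\mathbb{R}^d$ and let $b\in\mathbb{R}^d$. If for every transversal $\mathcal{T}$ of $\mathcal{F}_1,\dots,\mathcal{F}_k$ the set $K(\mathcal{T})$ intersects the closed Euclidean unit ball $B(b,1)$, then there exist $i\in[k]$ and a point $q\in\mathbb{R}^d$ such that $d(q,K)\le\frac1{\sqrt k}$ for all $K\in\mathcal{F}_i$.
   Context: A transversal of $\mathcal{F}_1,\dots,\mathcal{F}_k$ is $\mathcal{T}=(K_1,\dots,K_k)$ with $K_i\in\mathcal{F}_i$ for all $i$, and $K(\mathcal{T})=\bigcap_{i=1}^kK_i$. $B(b,1)$ is the closed Euclidean ball of centre $b$ and radius $1$; $d(q,K)$ is Euclidean distance from a point to a set. *)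

theory Defs
  imports "HOL-Analysis.Analysis"
begin

definition is_transversal :: "nat \<Rightarrow> (nat \<Rightarrow> 'a set set) \<Rightarrow> (nat \<Rightarrow> 'a set) \<Rightarrow> bool" where
  "is_transversal k F T \<longleftrightarrow> (\<forall>i\<in>{1..k}. T i \<in> F i)"

definition K_of :: "nat \<Rightarrow> (nat \<Rightarrow> 'a set) \<Rightarrow> 'a set" where
  "K_of k T = (\<Inter>i\<in>{1..k}. T i)"

end

theory Submission
  imports Defs
begin

lemma infdist_closure_le:
  fixes p y :: "'a::metric_space"
  assumes "y \<in> closure K" "K \<noteq> {}"
  shows "infdist p K \<le> dist p y"
proof -
  have "infdist y K = 0" using assms in_closure_iff_infdist_zero by blast
  moreover have "infdist p K \<le> infdist y K + dist p y" by (rule infdist_triangle)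
  ultimately show ?thesis by simp
qed

theorem theorem4p2:
  fixes F :: "nat \<Rightarrow> ('a::euclidean_space) set set" and k :: nat and b :: 'a
  assumes "k \<ge> 1"
    and "\<forall>i\<in>{1..k}. finite (F i) \<and> F i \<noteq> {} \<and> (\<forall>K\<in>F i. convex K)"
    and "\<forall>T. is_transversal k F T \<longrightarrow> K_of k T \<inter> cball b 1 \<noteq> {}"
  shows "\<exists>i\<in>{1..k}. \<exists>q. \<forall>K\<in>F i. infdist q K \<le> 1 / sqrt (real k)"
proof (rule ccontr)
  assume "\<not> ?thesis"
  hence "\<forall>i\<in>{1..k}. \<forall>q. \<exists>K\<in>F i. infdist q K > 1 / sqrt (real k)"
    by (auto simp: not_le)
  then obtain sel where sel: "\<And>i q. i \<in> {1..k} \<Longrightarrow> sel i q \<in> F i \<and> infdist q (sel i q) > 1 / sqrt (real k)"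
    by metis
  have kpos: "real k > 0" using assms(1) by simp
  define C where "C = (\<lambda>n (T::nat \<Rightarrow> 'a set). closure (\<Inter>j\<in>{1..n}. T j))"
  have nonempty: "(\<Inter>j\<in>{1..n}. T j) \<inter> cball b 1 \<noteq> {}"
    if "n \<le> k" "\<forall>j\<in>{1..n}. T j \<in> F j" for n T
  proof -
    define T' where "T' = (\<lambda>j. if j \<le> n then T j else (SOME K. K \<in> F j))"
    have "is_transversal k F T'"
      unfolding is_transversal_def T'_def
    proof
      fix j assume j: "j \<in> {1..k}"
      hence "F j \<noteq> {}" using assms(2) by blast
      hence "(SOME K. K \<in> F j) \<in> F j" by (simp add: some_in_eq)
      thus "(if j \<le> n then T j else (SOME K. K \<in> F j)) \<in> F j"
        using that(2) j by auto
    qed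
    hence "K_of k T' \<inter> cball b 1 \<noteq> {}" using assms(3) by blast
    moreover have "K_of k T' \<subseteq> (\<Inter>j\<in>{1..n}. T j)"
      unfolding K_of_def T'_def using that(1) by auto
    ultimately show ?thesis by blast
  qed
  have convC: "convex (C n T)" if "n \<le> k" "\<forall>j\<in>{1..n}. T j \<in> F j" for n T
    unfolding C_def using that assms(2)
  proof (intro convex_closure convex_INT)
    fix j assume j: "j \<in> {1..n}"
    hence "T j \<in> F j" "j \<in> {1..k}" using that by auto
    thus "convex (T j)" using assms(2) by blast
  qed
  have neC: "C n T \<noteq> {}" if "n \<le> k" "\<forall>j\<in>{1..n}. T j \<in> F j" for n T
    using nonempty[OF that] unfolding C_def using closure_subset by blast
  have main: "n \<le> k \<Longrightarrow> \<exists>T. (\<forall>j\<in>{1..n}. T j \<in> F j) \<and>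
      (n = 0 \<or> (dist b (closest_point (C n T) b))\<^sup>2 > real n / real k)" for n
  proof (induction n)
    case 0
    then show ?case by auto
  next
    case (Suc n)
    then obtain T where T: "\<forall>j\<in>{1..n}. T j \<in> F j"
      and H: "n = 0 \<or> (dist b (closest_point (C n T) b))\<^sup>2 > real n / real k" by auto
    have nk: "n \<le> k" using Suc by simp
    define p where "p = closest_point (C n T) b"
    have Hn: "(dist b p)\<^sup>2 \<ge> real n / real k" using H unfolding p_def by auto
    have clC: "closed (C n T)" unfolding C_def by simp
    have pC: "p \<in> C n T" unfolding p_def using closest_point_in_set[OF clC neC[OF nk T]] .
    have pmin: "\<forall>z\<in>C n T. dist b p \<le> dist b z"
      unfolding p_def using closest_point_exists(2)[OF clC neC[OF nk T]] .
    define K where "K = sel (Suc n) p"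
    have sn: "Suc n \<in> {1..k}" using Suc by simp
    have KF: "K \<in> F (Suc n)" and Kd: "infdist p K > 1 / sqrt (real k)"
      using sel[OF sn] unfolding K_def by auto
    define T' where "T' = T(Suc n := K)"
    have T': "\<forall>j\<in>{1..Suc n}. T' j \<in> F j" using T KF unfolding T'_def by auto
    have int_eq: "(\<Inter>j\<in>{1..Suc n}. T' j) = (\<Inter>j\<in>{1..n}. T j) \<inter> K"
      unfolding T'_def by (auto simp: atLeastAtMostSuc_conv)
    have sub: "C (Suc n) T' \<subseteq> C n T \<inter> closure K"
      unfolding C_def int_eq by (meson closure_mono inf_le1 inf_le2 le_inf_iff)
    define p' where "p' = closest_point (C (Suc n) T') b"
    have clC': "closed (C (Suc n) T')" unfolding C_def by simp
    have p'C: "p' \<in> C (Suc n) T'" unfolding p'_def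
      using closest_point_in_set[OF clC' neC[OF Suc(2) T']] .
    have Kne: "K \<noteq> {}" using p'C sub by auto
    have dot: "inner (b - p) (p' - p) \<le> 0"
      using any_closest_point_dot[OF convC[OF nk T] clC pC _ pmin, of p'] p'C sub by auto
    have step: "dist p p' > 1 / sqrt (real k)"
      using infdist_closure_le[of p' K p] p'C sub Kne Kd by auto
    have step2: "(dist p p')\<^sup>2 > 1 / real k"
    proof -
      have "(1 / sqrt (real k))\<^sup>2 < (dist p p')\<^sup>2"
        using step kpos by (intro power_strict_mono) auto
      thus ?thesis using kpos by (simp add: power_divide)
    qed
    have "(dist b p')\<^sup>2 = (dist b p)\<^sup>2 + (dist p p')\<^sup>2 - 2 * inner (b - p) (p' - p)"
    proof -
      have "b - p' = (b - p) - (p' - p)" by simp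
      hence "(dist b p')\<^sup>2 = (norm ((b - p) - (p' - p)))\<^sup>2" by (simp add: dist_norm)
      also have "\<dots> = (norm (b - p))\<^sup>2 + (norm (p' - p))\<^sup>2 - 2 * inner (b - p) (p' - p)"
        by (simp add: power2_norm_eq_inner inner_diff_left inner_diff_right inner_commute)
      finally show ?thesis by (simp add: dist_norm norm_minus_commute)
    qed
    hence "(dist b p')\<^sup>2 > real n / real k + 1 / real k" using dot step2 Hn by linarith
    moreover have "real n / real k + 1 / real k = real (Suc n) / real k"
      by (simp add: add_divide_distrib)
    ultimately show ?case using T' unfolding p'_def by auto
  qed
  obtain T where T: "\<forall>j\<in>{1..k}. T j \<in> F j"
    and H: "(dist b (closest_point (C k T) b))\<^sup>2 > real k / real k"
    using main[of k] assms(1) by auto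
  have "is_transversal k F T" using T unfolding is_transversal_def by auto
  hence "K_of k T \<inter> cball b 1 \<noteq> {}" using assms(3) by simp
  then obtain x where x: "x \<in> K_of k T" "dist b x \<le> 1" by auto
  have "x \<in> C k T" using x(1) closure_subset[of "K_of k T"] unfolding C_def K_of_def by (rule subsetD[rotated])
  hence "dist b (closest_point (C k T) b) \<le> 1"
    using closest_point_le[of "C k T" x b] x unfolding C_def by simp
  hence "(dist b (closest_point (C k T) b))\<^sup>2 \<le> 1"
    by (simp add: power_le_one)
  thus False using H kpos by simp
qed

end
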